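(* Let $G$ be a circle of circumference $1$ and let $\mathbf{x}\in G^n$ be such that the agents are not on one semicircle. Then for every $i\in N$, $\mathrm{cost}(\mathrm{rc}(\mathbf{x}),x_i)\le\frac14$.
   Context: $d(x,y)$ is the length of the shorter arc between $x,y$; $\hat{x}$ is the antipodal point of $x$. $\mathrm{cost}(P,x_i)=\mathbb{E}_{y\sim P}[d(x_i,y)]$. Agents are on one semicircle if all locations lie in some closed arc of length $1/2$. RC (Random Center) mechanism: the antipodal points $\hat{x}_1,\dots,\hat{x}_n$ partition $G$ into arcs between cyclically consecutive antipodal points; $\mathrm{rc}(\mathbf{x})$ returns the midpoint of each such arc with probability equal to its length (equivalently: pick $y$ uniformly on $G$ and return the midpoint of the arc containing $y$). *)

theory Defs
  imports "HOL-Analysis.Analysis"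
begin

text \<open>The circle G of circumference 1 is represented by the reals modulo 1:
  a real number t stands for the point t mod 1. All notions below are
  invariant under integer shifts of their arguments.\<close>

definition cdist :: "real \<Rightarrow> real \<Rightarrow> real" where
  "cdist x y = min (frac (x - y)) (frac (y - x))"

definition antipode :: "real \<Rightarrow> real" where
  "antipode x = x + 1/2"

definition on_semicircle :: "nat \<Rightarrow> (nat \<Rightarrow> real) \<Rightarrow> bool" where
  "on_semicircle n x \<longleftrightarrow> (\<exists>a. \<forall>j<n. frac (x j - a) \<le> 1/2)"

text \<open>Outcome of RC for the uniform sample y: the midpoint of the arc between
  cyclically consecutive antipodal points containing y. l is the
  counterclockwise-backward distance from y to the previous antipodal point,
  r the forward distance to the next one; the midpoint is y + (r - l)/2.\<close>
definition rc_point :: "nat \<Rightarrow> (nat \<Rightarrow> real) \<Rightarrow> real \<Rightarrow> real" where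
  "rc_point n x y =
     (let l = Min {frac (y - antipode (x j)) | j. j < n};
          r = Min {frac (antipode (x j) - y) | j. j < n}
      in y + (r - l) / 2)"

definition rc :: "nat \<Rightarrow> (nat \<Rightarrow> real) \<Rightarrow> real measure" where
  "rc n x = distr (uniform_measure lborel {0..<1}) borel (rc_point n x)"

definition cost :: "real measure \<Rightarrow> real \<Rightarrow> real" where
  "cost P p = (\<integral>y. cdist p y \<partial>P)"

end

theory Submission
  imports Defs
begin


lemma frac_meas[measurable]: "(\<lambda>x::real. frac x) \<in> borel_measurable borel"
  unfolding frac_def by measurable

lemma setform: "{f j | j. j < (n::nat)} = f ` {..<n}" by auto

lemma rc_point_meas[measurable]: "rc_point n x \<in> borel_measurable borel"
  unfolding rc_point_def Let_def setform by measurable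

lemma cdist_meas[measurable]: "(\<lambda>y. cdist p (g y)) \<in> borel_measurable borel" if [measurable]: "g \<in> borel_measurable borel"
  unfolding cdist_def by measurable

lemma cdist_bound: "0 \<le> cdist p y \<and> cdist p y \<le> 1"
  unfolding cdist_def by (auto simp: frac_lt_1 min_def intro: less_imp_le)

lemma cost_eq: "cost (rc n x) p = integral {0..1} (\<lambda>y. cdist p (rc_point n x y))"
proof -
  let ?F = "\<lambda>y. cdist p (rc_point n x y)"
  have um: "uniform_measure lborel {0..<1::real} = density lborel (\<lambda>y. ennreal (indicator {0..<1} y))"
    unfolding uniform_measure_def by (simp add: ennreal_indicator divide_ennreal_def)
  have "cost (rc n x) p = integral\<^sup>L (uniform_measure lborel {0..<1}) ?F"
    unfolding cost_def rc_def by (subst integral_distr) auto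
  also have "\<dots> = (\<integral>y. indicator {0..<1} y *\<^sub>R ?F y \<partial>lborel)"
    unfolding um by (subst integral_density) auto
  also have "\<dots> = (LINT y:{0..<1}|lborel. ?F y)"
    by (simp add: set_lebesgue_integral_def)
  also have "\<dots> = integral {0..<1} ?F"
  proof (rule set_borel_integral_eq_integral)
    show "set_integrable lborel {0..<1} ?F"
      unfolding set_integrable_def
      by (rule integrableI_bounded_set_indicator[where B=1]) (auto simp: cdist_bound)
  qed
  also have "\<dots> = integral {0..1} ?F"
    by (rule integral_spike_set) (auto intro: negligible_subset[of "{1}"])
  finally show ?thesis .
qed



definition PP :: "real \<Rightarrow> real set \<Rightarrow> real \<Rightarrow> real" where
  "PP a B t = Max (insert a {x\<in>B. x \<le> t})"
definition QQ :: "real \<Rightarrow> real set \<Rightarrow> real \<Rightarrow> real" where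
  "QQ b B t = Min (insert b {x\<in>B. t \<le> x})"

lemma lin_int:
  fixes a b s m c :: real
  assumes "a \<le> b"
  shows "((\<lambda>t. s * (t - m) + c) has_integral ((s * (b - m)^2/2 + c * b) - (s * (a - m)^2/2 + c * a))) {a..b}"
proof -
  have "((\<lambda>t. s * (t - m) + c) has_integral ((\<lambda>t. s * (t - m)^2/2 + c * t) b - (\<lambda>t. s * (t - m)^2/2 + c * t) a)) {a..b}"
  proof (rule fundamental_theorem_of_calculus[OF assms])
    fix x assume "x \<in> {a..b}"
    have "((\<lambda>t. s * (t - m)^2/2 + c * t) has_real_derivative (s * (x - m) + c)) (at x within {a..b})"
      by (auto intro!: derivative_eq_intros simp: field_simps)
    then show "((\<lambda>t. s * (t - m)^2/2 + c * t) has_vector_derivative (s * (x - m) + c)) (at x within {a..b})"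
      by (simp add: has_real_derivative_iff_has_vector_derivative)
  qed
  then show ?thesis by simp
qed

lemma g_int: "(\<lambda>t::real. \<bar>t - 1/2\<bar>) integrable_on {a..b}"
  by (intro integrable_continuous_real continuous_intros)

lemma base_ineq:
  fixes a b :: real
  assumes "a \<le> b"
  shows "(b - a) * \<bar>(a+b)/2 - 1/2\<bar> \<le> integral {a..b} (\<lambda>t. \<bar>t - 1/2\<bar>)"
proof -
  define m where "m = (a+b)/2"
  define s :: real where "s = (if m \<ge> 1/2 then 1 else -1)"
  define c where "c = \<bar>m - 1/2\<bar>"
  have "integral {a..b} (\<lambda>t. s * (t - m) + c) \<le> integral {a..b} (\<lambda>t. \<bar>t - 1/2\<bar>)"
  proof (rule integral_le)
    show "(\<lambda>t. s * (t - m) + c) integrable_on {a..b}"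
      using lin_int[OF assms] by (rule has_integral_integrable)
    show "(\<lambda>t. \<bar>t - 1/2\<bar>) integrable_on {a..b}" by (rule g_int)
    fix t show "s * (t - m) + c \<le> \<bar>t - 1/2\<bar>" by (auto simp: s_def c_def)
  qed
  moreover have "integral {a..b} (\<lambda>t. s * (t - m) + c) = (b - a) * c"
    using integral_unique[OF lin_int[OF assms, of s m c]]
    by (simp add: m_def power2_eq_square algebra_simps divide_simps)
  ultimately show ?thesis by (simp add: m_def c_def)
qed

lemma core:
  assumes "finite B" "B \<subseteq> {a<..<b}" "a \<le> b"
  shows "\<exists>I. ((\<lambda>t. \<bar>(PP a B t + QQ b B t)/2 - 1/2\<bar>) has_integral I) {a..b}
              \<and> I \<le> integral {a..b} (\<lambda>t. \<bar>t - 1/2\<bar>)"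
  using assms
proof (induction "card B" arbitrary: a B rule: less_induct)
  case less
  show ?case
  proof (cases "B = {}")
    case True
    have "((\<lambda>t. \<bar>(PP a B t + QQ b B t)/2 - 1/2\<bar>) has_integral (b - a) *\<^sub>R \<bar>(a+b)/2 - 1/2\<bar>) {a..b}"
      using has_integral_const_real[of "\<bar>(a+b)/2 - 1/2\<bar>" a b] less.prems(3)
      by (simp add: True PP_def QQ_def)
    then show ?thesis using base_ineq[OF less.prems(3)] by auto
  next
    case False
    define b0 where "b0 = Min B"
    define B' where "B' = B - {b0}"
    have b0B: "b0 \<in> B" using False less.prems(1) by (simp add: b0_def)
    have b0le: "\<And>x. x \<in> B \<Longrightarrow> b0 \<le> x" using less.prems(1) by (simp add: b0_def)
    have ab0: "a < b0" "b0 < b" using b0B less.prems(2) by auto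
    have cardB': "card B' < card B" using b0B less.prems(1) unfolding B'_def by (meson card_Diff1_less)
    have B'sub: "B' \<subseteq> {b0<..<b}" using less.prems(2) b0le by (force simp: B'_def)
    have fB': "finite B'" using less.prems(1) by (simp add: B'_def)
    obtain I2 where I2: "((\<lambda>t. \<bar>(PP b0 B' t + QQ b B' t)/2 - 1/2\<bar>) has_integral I2) {b0..b}"
      "I2 \<le> integral {b0..b} (\<lambda>t. \<bar>t - 1/2\<bar>)"
      using less.hyps[OF cardB' fB' B'sub less_imp_le[OF ab0(2)]] by blast
    have I2': "((\<lambda>t. \<bar>(PP a B t + QQ b B t)/2 - 1/2\<bar>) has_integral I2) {b0..b}"
    proof (rule has_integral_spike_finite[OF _ _ I2(1), of "{b0}"])
      fix t assume t: "t \<in> {b0..b} - {b0}"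
      have "{x\<in>B. x \<le> t} = insert b0 {x\<in>B'. x \<le> t}" using t b0B by (auto simp: B'_def)
      then have "PP a B t = max a (Max (insert b0 {x\<in>B'. x \<le> t}))"
        using less.prems(1) by (simp add: PP_def B'_def)
      also have "\<dots> = PP b0 B' t"
      proof -
        have "b0 \<le> Max (insert b0 {x\<in>B'. x \<le> t})" using fB' by (intro Max_ge) auto
        then show ?thesis using ab0 unfolding PP_def by (simp add: max_def)
      qed
      finally have "PP a B t = PP b0 B' t" .
      moreover have "{x\<in>B. t \<le> x} = {x\<in>B'. t \<le> x}" using t by (auto simp: B'_def)
      then have "QQ b B t = QQ b B' t" by (simp add: QQ_def)
      ultimately show "\<bar>(PP a B t + QQ b B t)/2 - 1/2\<bar> = \<bar>(PP b0 B' t + QQ b B' t)/2 - 1/2\<bar>" by simp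
    qed auto
    have c1: "((\<lambda>t. \<bar>(a+b0)/2 - 1/2\<bar>) has_integral (b0 - a) *\<^sub>R \<bar>(a+b0)/2 - 1/2\<bar>) {a..b0}"
      using has_integral_const_real[of "\<bar>(a+b0)/2 - 1/2\<bar>" a b0] ab0 by simp
    have I1': "((\<lambda>t. \<bar>(PP a B t + QQ b B t)/2 - 1/2\<bar>) has_integral (b0 - a) *\<^sub>R \<bar>(a+b0)/2 - 1/2\<bar>) {a..b0}"
    proof (rule has_integral_spike_finite[OF _ _ c1, of "{b0}"])
      fix t assume t: "t \<in> {a..b0} - {b0}"
      have "{x\<in>B. x \<le> t} = {}" using t b0le by force
      then have "PP a B t = a" unfolding PP_def by (metis Max_singleton)
      moreover have "{x\<in>B. t \<le> x} = B" using t b0le by force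
      then have "QQ b B t = b0"
        using less.prems(1) b0B ab0 b0le unfolding QQ_def
        by (intro Min_eqI) auto
      ultimately show "\<bar>(PP a B t + QQ b B t)/2 - 1/2\<bar> = \<bar>(a+b0)/2 - 1/2\<bar>" by simp
    qed auto
    have "((\<lambda>t. \<bar>(PP a B t + QQ b B t)/2 - 1/2\<bar>) has_integral ((b0 - a) *\<^sub>R \<bar>(a+b0)/2 - 1/2\<bar> + I2)) {a..b}"
      using has_integral_combine[OF _ _ I1' I2'] ab0 by auto
    moreover have "(b0 - a) *\<^sub>R \<bar>(a+b0)/2 - 1/2\<bar> + I2 \<le> integral {a..b} (\<lambda>t. \<bar>t - 1/2\<bar>)"
    proof -
      have "integral {a..b0} (\<lambda>t. \<bar>t - 1/2\<bar>) + integral {b0..b} (\<lambda>t. \<bar>t - 1/2\<bar>) = integral {a..b} (\<lambda>t. \<bar>t - 1/2\<bar>)"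
        by (rule Henstock_Kurzweil_Integration.integral_combine) (use ab0 g_int in auto)
      then show ?thesis using base_ineq[of a b0] ab0 I2(2) by simp
    qed
    ultimately show ?thesis by blast
  qed
qed



lemma quarter: "integral {0..1} (\<lambda>t::real. \<bar>t - 1/2\<bar>) = 1/4"
proof -
  have h1': "((\<lambda>t::real. -1 * (t - 1/2) + 0) has_integral 1/8) {0..1/2}"
    using lin_int[of 0 "1/2" "-1" "1/2" 0] by (simp add: power2_eq_square)
  have h1: "((\<lambda>t::real. \<bar>t - 1/2\<bar>) has_integral 1/8) {0..1/2}"
    by (rule has_integral_eq[OF _ h1']) auto
  have h2': "((\<lambda>t::real. 1 * (t - 1/2) + 0) has_integral 1/8) {1/2..1}"
    using lin_int[of "1/2" 1 1 "1/2" 0] by (simp add: power2_eq_square)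
  have h2: "((\<lambda>t::real. \<bar>t - 1/2\<bar>) has_integral 1/8) {1/2..1}"
    by (rule has_integral_eq[OF _ h2']) auto
  have "((\<lambda>t::real. \<bar>t - 1/2\<bar>) has_integral (1/8 + 1/8)) {0..1}"
    by (rule has_integral_combine[OF _ _ h1 h2]) auto
  then show ?thesis by (simp add: integral_unique)
qed

lemma H0_int:
  assumes "finite B" "0 \<in> B" "B \<subseteq> {0..<1}"
  shows "\<exists>I. ((\<lambda>t. \<bar>(PP 0 B t + QQ 1 B t)/2 - 1/2\<bar>) has_integral I) {0..1} \<and> I \<le> 1/4"
proof -
  have "B - {0} \<subseteq> {0<..<1}" using assms(3) by force
  then obtain I where I: "((\<lambda>t. \<bar>(PP 0 (B - {0}) t + QQ 1 (B - {0}) t)/2 - 1/2\<bar>) has_integral I) {0..1}"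
    "I \<le> integral {0..1} (\<lambda>t::real. \<bar>t - 1/2\<bar>)"
    using core[of "B - {0}" 0 1] assms(1) by auto
  have "((\<lambda>t. \<bar>(PP 0 B t + QQ 1 B t)/2 - 1/2\<bar>) has_integral I) {0..1}"
  proof (rule has_integral_spike_finite[OF _ _ I(1), of "{0}"])
    fix t :: real assume t: "t \<in> {0..1} - {0}"
    have "insert 0 {x\<in>B. x \<le> t} = insert 0 {x\<in>B - {0}. x \<le> t}" by auto
    then have "PP 0 B t = PP 0 (B - {0}) t" by (simp add: PP_def)
    moreover have "{x\<in>B. t \<le> x} = {x\<in>B - {0}. t \<le> x}" using t by auto
    then have "QQ 1 B t = QQ 1 (B - {0}) t" by (simp add: QQ_def)
    ultimately show "\<bar>(PP 0 B t + QQ 1 B t)/2 - 1/2\<bar> = \<bar>(PP 0 (B - {0}) t + QQ 1 (B - {0}) t)/2 - 1/2\<bar>" by simp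
  qed auto
  then show ?thesis using I(2) quarter by auto
qed

lemma frac_01:
  fixes t b :: real
  assumes "0 \<le> t" "t < 1" "0 \<le> b" "b < 1"
  shows "frac (t - b) = (if b \<le> t then t - b else t - b + 1)"
proof (cases "b \<le> t")
  case True
  then show ?thesis using assms by (simp add: frac_eq) 
next
  case False
  from assms have "frac (t - b) = t - b + 1"
    unfolding frac_unique_iff using False by (auto simp: algebra_simps)
  then show ?thesis using False by simp
qed

lemma periodic:
  fixes H :: "real \<Rightarrow> real"
  assumes H: "(H has_integral I) {0..1}"
  shows "((\<lambda>y. H (frac (y - c))) has_integral I) {0..1}"
proof -
  define d where "d = frac c"
  have d: "0 \<le> d" "d < 1" by (auto simp: d_def frac_lt_1)
  have eq: "\<And>y. frac (y - c) = frac (y - d)" by (simp add: d_def frac_diff_simp)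
  have Hi: "H integrable_on {0..1}" using H by blast
  have i1: "(H has_integral integral {0..1-d} H) {0..1-d}"
    using integrable_subinterval_real[OF Hi, of 0 "1-d"] d by (auto intro: integrable_integral)
  have i2: "(H has_integral integral {1-d..1} H) {1-d..1}"
    using integrable_subinterval_real[OF Hi, of "1-d" 1] d by (auto intro: integrable_integral)
  have sumI: "integral {0..1-d} H + integral {1-d..1} H = I"
    using Henstock_Kurzweil_Integration.integral_combine[OF _ _ Hi, of "1-d"] d H
    by (simp add: integral_unique)
  have A: "((\<lambda>y. H (frac (y - c))) has_integral integral {1-d..1} H) {0..d}"
  proof -
    have S: "((H \<circ> (+) (1-d)) has_integral integral {1-d..1} H) {0..d}"
      using has_integral_shift_Icc_real[of H "1-d" _ 0 d] i2 by simp
    show ?thesis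
    proof (rule has_integral_spike_finite[OF _ _ S, of "{d}"])
      fix y assume y: "y \<in> {0..d} - {d}"
      have fr: "frac (y - d) = y - d + 1" using frac_01[of y d] y d by auto
      show "H (frac (y - c)) = (H \<circ> (+) (1-d)) y" by (simp only: eq o_def fr) (simp add: algebra_simps)
    qed auto
  qed
  have B: "((\<lambda>y. H (frac (y - c))) has_integral integral {0..1-d} H) {d..1}"
  proof -
    have S: "((H \<circ> (+) (-d)) has_integral integral {0..1-d} H) {d..1}"
      using has_integral_shift_Icc_real[of H "-d" _ d 1] i1 by simp
    show ?thesis
    proof (rule has_integral_spike_finite[OF _ _ S, of "{1}"])
      fix y assume y: "y \<in> {d..1} - {1}"
      have fr: "frac (y - d) = y - d" using frac_01[of y d] y d by auto
      show "H (frac (y - c)) = (H \<circ> (+) (-d)) y" by (simp only: eq o_def fr) (simp add: algebra_simps)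
    qed auto
  qed
  have "((\<lambda>y. H (frac (y - c))) has_integral (integral {1-d..1} H + integral {0..1-d} H)) {0..1}"
    by (rule has_integral_combine[OF _ _ A B]) (use d in auto)
  then show ?thesis using sumI by (simp add: add.commute)
qed



lemma PP_props:
  assumes "finite B" "0 \<in> B" "0 \<le> t"
  shows "PP 0 B t \<in> B" "PP 0 B t \<le> t" "0 \<le> PP 0 B t" "\<And>b. b \<in> B \<Longrightarrow> b \<le> t \<Longrightarrow> b \<le> PP 0 B t"
proof -
  have f: "finite (insert 0 {x\<in>B. x \<le> t})" using assms(1) by auto
  have "PP 0 B t \<in> insert 0 {x\<in>B. x \<le> t}" unfolding PP_def by (rule Max_in[OF f]) auto
  then show "PP 0 B t \<in> B" "PP 0 B t \<le> t" using assms by auto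
  show "0 \<le> PP 0 B t" unfolding PP_def by (rule Max_ge[OF f]) auto
  show "\<And>b. b \<in> B \<Longrightarrow> b \<le> t \<Longrightarrow> b \<le> PP 0 B t" unfolding PP_def by (rule Max_ge[OF f]) auto
qed

lemma QQ_props:
  assumes "finite B" "0 \<in> B" "0 \<le> t" "t < 1" "B \<subseteq> {0..<1}"
  shows "(QQ 1 B t \<in> B \<and> t \<le> QQ 1 B t) \<or> (QQ 1 B t = 1 \<and> 0 < t)" "QQ 1 B t \<le> 1" "t \<le> QQ 1 B t"
    "\<And>b. b \<in> B \<Longrightarrow> t \<le> b \<Longrightarrow> QQ 1 B t \<le> b"
proof -
  have f: "finite (insert 1 {x\<in>B. t \<le> x})" using assms(1) by auto
  have "QQ 1 B t \<in> insert 1 {x\<in>B. t \<le> x}" unfolding QQ_def by (rule Min_in[OF f]) auto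
  moreover have "t = 0 \<Longrightarrow> QQ 1 B t \<le> 0" unfolding QQ_def using assms(2) by (intro Min_le[OF f]) auto
  ultimately show "(QQ 1 B t \<in> B \<and> t \<le> QQ 1 B t) \<or> (QQ 1 B t = 1 \<and> 0 < t)"
    using assms by force
  show "QQ 1 B t \<le> 1" unfolding QQ_def by (rule Min_le[OF f]) auto
  show "\<And>b. b \<in> B \<Longrightarrow> t \<le> b \<Longrightarrow> QQ 1 B t \<le> b" unfolding QQ_def by (rule Min_le[OF f]) auto
  show "t \<le> QQ 1 B t" unfolding QQ_def using f assms(4) by (auto intro!: Min.boundedI)
qed

lemma Lmin:
  assumes "finite B" "0 \<in> B" "B \<subseteq> {0..<1}" "0 \<le> t" "t < 1"
  shows "Min ((\<lambda>b. frac (t - b)) ` B) = t - PP 0 B t"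
proof (rule Min_eqI)
  note P = PP_props[OF assms(1,2,4)]
  show "finite ((\<lambda>b. frac (t - b)) ` B)" using assms(1) by auto
  have "PP 0 B t \<in> {0..<1}" using P(1) assms(3) by auto
  then show "t - PP 0 B t \<in> (\<lambda>b. frac (t - b)) ` B"
    using P(1,2) frac_01[of t "PP 0 B t"] assms by (intro image_eqI[of _ _ "PP 0 B t"]) auto
  fix y assume "y \<in> (\<lambda>b. frac (t - b)) ` B"
  then obtain b where b: "b \<in> B" "y = frac (t - b)" by auto
  then have "b \<in> {0..<1}" using assms(3) by auto
  then show "t - PP 0 B t \<le> y"
    using b frac_01[of t b] assms P(3) P(4)[of b] by (auto split: if_splits)
qed

lemma Rmin:
  assumes "finite B" "0 \<in> B" "B \<subseteq> {0..<1}" "0 \<le> t" "t < 1"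
  shows "Min ((\<lambda>b. frac (b - t)) ` B) = QQ 1 B t - t"
proof (rule Min_eqI)
  note Q = QQ_props[OF assms(1,2,4,5,3)]
  show "finite ((\<lambda>b. frac (b - t)) ` B)" using assms(1) by auto
  show "QQ 1 B t - t \<in> (\<lambda>b. frac (b - t)) ` B"
    using Q(1)
  proof
    assume q: "QQ 1 B t \<in> B \<and> t \<le> QQ 1 B t"
    then have "QQ 1 B t < 1" using assms(3) by auto
    then show ?thesis using q assms by (intro image_eqI[of _ _ "QQ 1 B t"]) (auto simp: frac_eq)
  next
    assume q: "QQ 1 B t = 1 \<and> 0 < t"
    then show ?thesis using assms frac_01[of 0 t] by (intro image_eqI[of _ _ 0]) auto
  qed
  fix y assume "y \<in> (\<lambda>b. frac (b - t)) ` B"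
  then obtain b where b: "b \<in> B" "y = frac (b - t)" by auto
  then have "b \<in> {0..<1}" using assms(3) by auto
  then show "QQ 1 B t - t \<le> y"
    using b frac_01[of b t] assms Q(2) Q(4)[of b] by (auto split: if_splits)
qed


lemma cd:
  fixes c m :: real and k :: int
  assumes "0 \<le> m" "m \<le> 1"
  shows "cdist (c - 1/2) (c + of_int k + m) = \<bar>m - 1/2\<bar>"
proof -
  have e1: "c + of_int k + m - (c - 1/2) = m + 1/2 + of_int k" by simp
  have e2: "c - 1/2 - (c + of_int k + m) = - m - 1/2 - of_int k" by simp
  show ?thesis
  proof (cases "m < 1/2")
    case True
    have "frac (m + 1/2 + of_int k) = m + 1/2"
      unfolding frac_unique_iff using True assms by auto
    moreover have "frac (- m - 1/2 - of_int k) = 1/2 - m"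
    proof -
      have "- m - 1/2 - of_int k - (1/2 - m) = of_int (- k - 1)" by simp
      then have d: "- m - 1/2 - of_int k - (1/2 - m) \<in> \<int>" by (metis Ints_of_int)
      show ?thesis unfolding frac_unique_iff using d True assms by auto
    qed
    ultimately show ?thesis unfolding cdist_def e1 e2 using True assms by (simp add: min_def)
  next
    case False
    have "frac (m + 1/2 + of_int k) = m - 1/2"
    proof -
      have "m + 1/2 + of_int k - (m - 1/2) = of_int (k + 1)" by simp
      then have d: "m + 1/2 + of_int k - (m - 1/2) \<in> \<int>" by (metis Ints_of_int)
      show ?thesis unfolding frac_unique_iff using d False assms by auto
    qed
    moreover have "m - 1/2 \<le> frac (- m - 1/2 - of_int k)"
    proof (cases "m = 1/2")
      case True then show ?thesis using frac_ge_0[of "- m - 1/2 - of_int k"] by linarith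
    next
      case F: False
      have "- m - 1/2 - of_int k - (3/2 - m) = of_int (- k - 2)" by simp
      then have d: "- m - 1/2 - of_int k - (3/2 - m) \<in> \<int>" by (metis Ints_of_int)
      have "frac (- m - 1/2 - of_int k) = 3/2 - m"
        unfolding frac_unique_iff using d False F assms by auto
      then show ?thesis using assms by simp
    qed
    ultimately show ?thesis unfolding cdist_def e1 e2 using False assms by (simp add: min_def)
  qed
qed



lemma frac_ff: "frac (frac u - frac v) = frac (u - v)" for u v :: real
  by (metis frac_diff_simp frac_add_simps(1) diff_conv_add_uminus)

lemma B_props:
  fixes x :: "nat \<Rightarrow> real" and n i :: nat
  assumes "i < n"
  shows "finite ((\<lambda>j. frac (antipode (x j) - (x i + 1/2))) ` {..<n})"
    "0 \<in> (\<lambda>j. frac (antipode (x j) - (x i + 1/2))) ` {..<n}"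
    "(\<lambda>j. frac (antipode (x j) - (x i + 1/2))) ` {..<n} \<subseteq> {0..<1}"
  subgoal by simp
  subgoal using assms by (auto simp: antipode_def intro!: image_eqI[of _ _ i])
  subgoal by (auto simp: frac_lt_1)
  done

lemma pointwise:
  fixes x :: "nat \<Rightarrow> real" and n i :: nat and y :: real
  assumes "i < n"
  defines "c \<equiv> x i + 1/2"
  defines "B \<equiv> (\<lambda>j. frac (antipode (x j) - c)) ` {..<n}"
  shows "cdist (x i) (rc_point n x y) = \<bar>(PP 0 B (frac (y - c)) + QQ 1 B (frac (y - c)))/2 - 1/2\<bar>"
proof -
  define t where "t = frac (y - c)"
  have t: "0 \<le> t" "t < 1" by (auto simp: t_def frac_lt_1)
  note BP = B_props[OF assms(1), of x, folded c_def, folded B_def]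
  have S1: "{frac (y - antipode (x j)) | j. j < n} = (\<lambda>b. frac (t - b)) ` B"
  proof -
    have "\<And>j. frac (y - antipode (x j)) = frac (t - frac (antipode (x j) - c))"
      unfolding t_def frac_ff by simp
    then show ?thesis unfolding setform B_def image_image by simp
  qed
  have S2: "{frac (antipode (x j) - y) | j. j < n} = (\<lambda>b. frac (b - t)) ` B"
  proof -
    have "\<And>j. frac (antipode (x j) - y) = frac (frac (antipode (x j) - c) - t)"
      unfolding t_def frac_ff by simp
    then show ?thesis unfolding setform B_def image_image by simp
  qed
  have yt: "y = c + of_int \<lfloor>y - c\<rfloor> + t" unfolding t_def frac_def by simp
  have rc: "rc_point n x y = c + of_int \<lfloor>y - c\<rfloor> + (PP 0 B t + QQ 1 B t)/2"
    unfolding rc_point_def Let_def S1 S2 Lmin[OF BP t] Rmin[OF BP t]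
    by (subst (1) yt) (simp add: field_simps)
  have xi: "x i = c - 1/2" by (simp add: c_def)
  have m: "0 \<le> (PP 0 B t + QQ 1 B t)/2" "(PP 0 B t + QQ 1 B t)/2 \<le> 1"
    using PP_props[OF BP(1,2) t(1)] QQ_props[OF BP(1,2) t BP(3)] by auto
  show ?thesis unfolding rc xi t_def[symmetric] by (rule cd[OF m])
qed

theorem mainTheorem13:
  fixes n :: nat and x :: "nat \<Rightarrow> real"
  assumes "\<not> on_semicircle n x"
  shows "\<forall>i<n. cost (rc n x) (x i) \<le> 1/4"
proof (intro allI impI)
  fix i assume i: "i < n"
  define c where "c = x i + 1/2"
  define B where "B = (\<lambda>j. frac (antipode (x j) - c)) ` {..<n}"
  note BP = B_props[OF i, of x, folded c_def, folded B_def]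
  obtain I where I: "((\<lambda>t. \<bar>(PP 0 B t + QQ 1 B t)/2 - 1/2\<bar>) has_integral I) {0..1}" "I \<le> 1/4"
    using H0_int[OF BP] by blast
  have "((\<lambda>y. \<bar>(PP 0 B (frac (y - c)) + QQ 1 B (frac (y - c)))/2 - 1/2\<bar>) has_integral I) {0..1}"
    using periodic[OF I(1)] by simp
  also have "(\<lambda>y. \<bar>(PP 0 B (frac (y - c)) + QQ 1 B (frac (y - c)))/2 - 1/2\<bar>) = (\<lambda>y. cdist (x i) (rc_point n x y))"
    using pointwise[OF i, of x] unfolding c_def B_def by simp
  finally have "integral {0..1} (\<lambda>y. cdist (x i) (rc_point n x y)) = I" by (rule integral_unique)
  then show "cost (rc n x) (x i) \<le> 1/4" using cost_eq I(2) by simp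
qed


end
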